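(* Let $M=\{a,\bar a,b,\bar b\}^*$ be the free monoid on the four letters $a,\bar a,b,\bar b$, and let $F$ be the free group with free basis $\{a,\bar a,b,\bar b\}$. Equip $F$ with the profinite topology, and equip $M$ with the subspace topology induced by the natural embedding $M\hookrightarrow F$. Let $D_2^{'*}\subseteq M$ be the one-sided Dyck language and $D_2^*\subseteq M$ the two-sided Dyck language on the two pairs $\{a,\bar a\}$, $\{b,\bar b\}$. Then the closure of $D_2^{'*}$ in $M$ equals $D_2^*$.
   Context: The profinite topology on $F$ is the group topology in which the subgroups of finite index of $F$ form a basis of open neighborhoods of $1_F$. The one-sided (restricted) Dyck language $D_2^{'*}$ consists of the words $w\in M$ that can be reduced to the empty word by successively deleting subwords of the form $a\bar a$ or $b\bar b$ (i.e. $a,b$ are opening brackets and $\bar a,\bar b$ the corresponding closing brackets, and the word is correctly bracketed with each opening bracket preceding its closing bracket). The two-sided (unrestricted) Dyck language $D_2^*$ consists of the words $w\in M$ that can be reduced to the empty word by successively deleting subwords of the form $a\bar a$, $\bar a a$, $b\bar b$, or $\bar b b$. *)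

theory Defs
  imports "HOL-Analysis.Analysis" "HOL-Algebra.Coset"
begin

text \<open>The four letters a, abar, b, bbar. The free monoid M is \<open>letter list\<close>.\<close>
datatype letter = A | Abar | B | Bbar

text \<open>Free group F on the free basis {a, abar, b, bbar} (four independent generators):
  elements are freely reduced words over letters with a sign (True = inverse).\<close>
type_synonym gword = "(letter \<times> bool) list"

fun ginv_letter :: "letter \<times> bool \<Rightarrow> letter \<times> bool" where
  "ginv_letter (x, s) = (x, \<not> s)"

fun push :: "letter \<times> bool \<Rightarrow> gword \<Rightarrow> gword" where
  "push x [] = [x]"
| "push x (y # ys) = (if y = ginv_letter x then ys else x # y # ys)"

definition reduce :: "gword \<Rightarrow> gword" where
  "reduce w = foldr push w []"

definition reduced :: "gword \<Rightarrow> bool" where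
  "reduced w \<longleftrightarrow> (\<forall>i. Suc i < length w \<longrightarrow> w ! Suc i \<noteq> ginv_letter (w ! i))"

definition free_group_F :: "gword monoid" where
  "free_group_F = \<lparr>carrier = {w. reduced w}, mult = (\<lambda>u v. reduce (u @ v)), one = []\<rparr>"

definition fin_index_subgroups :: "gword set set" where
  "fin_index_subgroups = {H. subgroup H free_group_F \<and> finite (rcosets\<^bsub>free_group_F\<^esub> H)}"

definition profinite_F :: "gword topology" where
  "profinite_F = topology_generated_by
     {x <#\<^bsub>free_group_F\<^esub> H | x H. x \<in> carrier free_group_F \<and> H \<in> fin_index_subgroups}"

definition emb :: "letter list \<Rightarrow> gword" where
  "emb w = map (\<lambda>x. (x, False)) w"

text \<open>Topology on M: subspace topology induced via the embedding (M identified with emb ` UNIV).\<close>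
definition topM :: "gword topology" where
  "topM = subtopology profinite_F (range emb)"

definition del_one_sided :: "(letter list \<times> letter list) set" where
  "del_one_sided = {(u @ [x, y] @ v, u @ v) | u v x y. (x, y) \<in> {(A, Abar), (B, Bbar)}}"

definition del_two_sided :: "(letter list \<times> letter list) set" where
  "del_two_sided = {(u @ [x, y] @ v, u @ v) | u v x y.
      (x, y) \<in> {(A, Abar), (Abar, A), (B, Bbar), (Bbar, B)}}"

definition dyck_one_sided :: "letter list set" where
  "dyck_one_sided = {w. (w, []) \<in> del_one_sided\<^sup>*}"

definition dyck_two_sided :: "letter list set" where
  "dyck_two_sided = {w. (w, []) \<in> del_two_sided\<^sup>*}"

end

theory Submission
  imports Defs "HOL-Combinatorics.Permutations" "HOL-Algebra.Bij" "HOL-Algebra.Multiplicative_Group" "HOL-Algebra.Left_Coset"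
begin

lemma ginv_ginv[simp]: "ginv_letter (ginv_letter x) = x"
  by (cases x) auto

lemma ginv_neq[simp]: "ginv_letter x \<noteq> x"
  by (cases x) auto

lemma reduced_Nil[simp]: "reduced []" by (simp add: reduced_def)

lemma reduced_Cons: "reduced (x # w) \<longleftrightarrow> reduced w \<and> (w = [] \<or> hd w \<noteq> ginv_letter x)"
proof
  assume r: "reduced (x # w)"
  have "reduced w" unfolding reduced_def
  proof (intro allI impI)
    fix i assume "Suc i < length w"
    then show "w ! Suc i \<noteq> ginv_letter (w ! i)"
      using r[unfolded reduced_def, rule_format, of "Suc i"] by simp
  qed
  moreover have "w = [] \<or> hd w \<noteq> ginv_letter x"
    using r[unfolded reduced_def, rule_format, of 0] by (cases w) auto
  ultimately show "reduced w \<and> (w = [] \<or> hd w \<noteq> ginv_letter x)" by blast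
next
  assume h: "reduced w \<and> (w = [] \<or> hd w \<noteq> ginv_letter x)"
  show "reduced (x # w)" unfolding reduced_def
  proof (intro allI impI)
    fix i assume i: "Suc i < length (x # w)"
    show "(x # w) ! Suc i \<noteq> ginv_letter ((x # w) ! i)"
    proof (cases i)
      case 0 then show ?thesis using h i by (cases w) auto
    next
      case (Suc j) then show ?thesis using h i by (auto simp: reduced_def)
    qed
  qed
qed

lemma reduced_tl: "reduced (x # w) \<Longrightarrow> reduced w"
  by (simp add: reduced_Cons)

lemma push_reduced: "reduced w \<Longrightarrow> reduced (push x w)"
  by (cases w) (auto simp: reduced_Cons)

lemma foldr_push_reduced: "reduced z \<Longrightarrow> reduced (foldr push u z)"
  by (induction u) (auto intro: push_reduced)

lemma reduced_reduce: "reduced (reduce w)"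
  unfolding reduce_def by (rule foldr_push_reduced) simp

lemma push_reduced_id: "reduced (x # w) \<Longrightarrow> push x w = x # w"
  by (cases w) (auto simp: reduced_Cons)

lemma reduce_reduced: "reduced w \<Longrightarrow> reduce w = w"
proof (induction w)
  case Nil then show ?case by (simp add: reduce_def)
next
  case (Cons x w)
  then have "reduce w = w" by (simp add: reduced_Cons)
  then show ?case using Cons.prems by (simp add: reduce_def push_reduced_id)
qed

lemma reduce_append: "reduce (u @ v) = foldr push u (reduce v)"
  by (simp add: reduce_def)

lemma push_push_inv: "reduced t \<Longrightarrow> push x (push (ginv_letter x) t) = t"
proof (cases t)
  case Nil then show ?thesis by simp
next
  case (Cons y ys)
  assume r: "reduced t"
  show ?thesis
  proof (cases "y = x")
    case True
    then have "push (ginv_letter x) t = ys" using Cons by simp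
    moreover have "push x ys = x # ys" using r Cons True by (intro push_reduced_id) (simp add: reduced_Cons)
    ultimately show ?thesis using Cons True by simp
  next
    case False
    then have "push (ginv_letter x) t = ginv_letter x # t" using Cons by auto
    then show ?thesis by simp
  qed
qed

lemma foldr_push_push: "reduced r \<Longrightarrow> reduced z \<Longrightarrow> foldr push (push x r) z = push x (foldr push r z)"
proof (cases r)
  case Nil then show ?thesis by simp
next
  case (Cons y ys)
  assume rr: "reduced r" and rz: "reduced z"
  show ?thesis
  proof (cases "y = ginv_letter x")
    case True
    have "reduced (foldr push ys z)" using rz by (rule foldr_push_reduced)
    then show ?thesis using Cons True by (simp add: push_push_inv)
  next
    case False then show ?thesis using Cons by simp
  qed
qed

lemma foldr_push_reduce: "reduced z \<Longrightarrow> foldr push (reduce u) z = foldr push u z"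
proof (induction u)
  case Nil then show ?case by (simp add: reduce_def)
next
  case (Cons x u)
  have "foldr push (reduce (x # u)) z = foldr push (push x (reduce u)) z" by (simp add: reduce_def)
  also have "\<dots> = push x (foldr push (reduce u) z)"
    using Cons.prems by (intro foldr_push_push reduced_reduce) auto
  finally show ?case using Cons by simp
qed

lemma reduce_reduce_left: "reduce (reduce u @ v) = reduce (u @ v)"
  by (simp add: reduce_append foldr_push_reduce reduced_reduce)

lemma reduce_reduce_right: "reduce (u @ reduce v) = reduce (u @ v)"
  by (simp add: reduce_append reduce_reduced reduced_reduce)

lemma reduce_Cons: "reduce (x # w) = push x (reduce w)"
  by (simp add: reduce_def)

lemma reduce_inv: "reduce (rev (map ginv_letter u) @ u) = []"
proof (induction u rule: rev_induct)
  case Nil then show ?case by (simp add: reduce_def)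
next
  case (snoc x u)
  let ?S = "rev (map ginv_letter u) @ u"
  have "rev (map ginv_letter (u @ [x])) @ u @ [x] = ginv_letter x # (?S @ [x])"
    by simp
  moreover have "reduce (?S @ [x]) = [x]"
    using reduce_reduce_left[of ?S "[x]"] snoc by (simp add: reduce_def)
  ultimately show ?case by (simp add: reduce_Cons)
qed

lemma F_mult: "x \<otimes>\<^bsub>free_group_F\<^esub> y = reduce (x @ y)" by (simp add: free_group_F_def)
lemma F_one: "\<one>\<^bsub>free_group_F\<^esub> = []" by (simp add: free_group_F_def)
lemma F_carrier: "carrier free_group_F = {w. reduced w}" by (simp add: free_group_F_def)

lemma group_F: "group free_group_F"
proof (rule groupI)
  fix x y assume "x \<in> carrier free_group_F" "y \<in> carrier free_group_F"
  show "x \<otimes>\<^bsub>free_group_F\<^esub> y \<in> carrier free_group_F"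
    by (simp add: F_mult F_carrier reduced_reduce)
next
  show "\<one>\<^bsub>free_group_F\<^esub> \<in> carrier free_group_F" by (simp add: F_one F_carrier)
next
  fix x y z
  show "x \<otimes>\<^bsub>free_group_F\<^esub> y \<otimes>\<^bsub>free_group_F\<^esub> z = x \<otimes>\<^bsub>free_group_F\<^esub> (y \<otimes>\<^bsub>free_group_F\<^esub> z)"
    by (simp add: F_mult reduce_reduce_left reduce_reduce_right)
next
  fix x assume "x \<in> carrier free_group_F"
  then show "\<one>\<^bsub>free_group_F\<^esub> \<otimes>\<^bsub>free_group_F\<^esub> x = x"
    by (simp add: F_mult F_one F_carrier reduce_reduced)
next
  fix x assume "x \<in> carrier free_group_F"
  show "\<exists>y\<in>carrier free_group_F. y \<otimes>\<^bsub>free_group_F\<^esub> x = \<one>\<^bsub>free_group_F\<^esub>"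
    by (rule bexI[of _ "reduce (rev (map ginv_letter x))"])
       (simp_all add: F_mult F_one F_carrier reduce_reduce_left reduce_inv reduced_reduce)
qed

fun lact :: "(letter \<Rightarrow> nat \<Rightarrow> nat) \<Rightarrow> letter \<times> bool \<Rightarrow> nat \<Rightarrow> nat" where
  "lact base (x, s) = (if s then inv_into UNIV (base x) else base x)"

definition ev :: "(letter \<Rightarrow> nat \<Rightarrow> nat) \<Rightarrow> gword \<Rightarrow> nat \<Rightarrow> nat" where
  "ev base w = foldr (\<lambda>l f. lact base l \<circ> f) w id"

lemma ev_Nil[simp]: "ev base [] = id" by (simp add: ev_def)
lemma ev_Cons[simp]: "ev base (l # w) = lact base l \<circ> ev base w" by (simp add: ev_def)
lemma ev_append: "ev base (u @ v) = ev base u \<circ> ev base v"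
  by (induction u) auto

lemma lact_ginv:
  assumes "\<And>x. bij (base x)"
  shows "lact base l \<circ> lact base (ginv_letter l) = id"
proof -
  obtain x s where l: "l = (x, s)" by (cases l)
  have b: "bij (base x)" using assms by blast
  then have "inv_into UNIV (base x) \<circ> base x = id" "base x \<circ> inv_into UNIV (base x) = id"
    by (auto simp: bij_def surj_iff)
  then show ?thesis using l by auto
qed

lemma ev_push:
  assumes "\<And>x. bij (base x)"
  shows "ev base (push l w) = lact base l \<circ> ev base w"
proof (cases w)
  case Nil then show ?thesis by simp
next
  case (Cons y ys)
  show ?thesis
  proof (cases "y = ginv_letter l")
    case True
    have "lact base l \<circ> ev base w = (lact base l \<circ> lact base (ginv_letter l)) \<circ> ev base ys"
      using Cons True by (simp add: comp_assoc)
    then show ?thesis using Cons True lact_ginv[OF assms] by simp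
  next
    case False then show ?thesis using Cons by simp
  qed
qed

lemma ev_reduce:
  assumes "\<And>x. bij (base x)"
  shows "ev base (reduce w) = ev base w"
  by (induction w) (simp_all add: reduce_Cons ev_push[OF assms] reduce_def[of "[]"])

lemma ev_mult:
  assumes "\<And>x. bij (base x)"
  shows "ev base (x \<otimes>\<^bsub>free_group_F\<^esub> y) = ev base x \<circ> ev base y"
  by (simp add: F_mult ev_reduce[OF assms] ev_append)

definition kerH :: "(letter \<Rightarrow> nat \<Rightarrow> nat) \<Rightarrow> gword set" where
  "kerH base = {g \<in> carrier free_group_F. ev base g = id}"

lemma ev_inv:
  assumes "\<And>x. bij (base x)" and g: "g \<in> carrier free_group_F"
  shows "ev base (inv\<^bsub>free_group_F\<^esub> g) \<circ> ev base g = id"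
    and "ev base g \<circ> ev base (inv\<^bsub>free_group_F\<^esub> g) = id"
proof -
  interpret group free_group_F by (rule group_F)
  have "ev base (inv\<^bsub>free_group_F\<^esub> g \<otimes>\<^bsub>free_group_F\<^esub> g) = id" using g by (simp add: F_one)
  then show "ev base (inv\<^bsub>free_group_F\<^esub> g) \<circ> ev base g = id" by (simp add: ev_mult[OF assms(1)])
  have "ev base (g \<otimes>\<^bsub>free_group_F\<^esub> inv\<^bsub>free_group_F\<^esub> g) = id" using g by (simp add: F_one)
  then show "ev base g \<circ> ev base (inv\<^bsub>free_group_F\<^esub> g) = id" by (simp add: ev_mult[OF assms(1)])
qed

lemma kerH_subgroup:
  assumes "\<And>x. bij (base x)"
  shows "subgroup (kerH base) free_group_F"
proof -
  interpret group free_group_F by (rule group_F)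
  show ?thesis
  proof (rule subgroupI)
    show "kerH base \<subseteq> carrier free_group_F" by (auto simp: kerH_def)
    show "kerH base \<noteq> {}" using one_closed by (auto simp: kerH_def F_one simp del: one_closed)
  next
    fix a assume a: "a \<in> kerH base"
    then have ac: "a \<in> carrier free_group_F" "ev base a = id" by (auto simp: kerH_def)
    have "ev base (inv\<^bsub>free_group_F\<^esub> a) \<circ> ev base a = id" by (rule ev_inv(1)[OF assms ac(1)])
    then show "inv\<^bsub>free_group_F\<^esub> a \<in> kerH base" using ac by (auto simp: kerH_def)
  next
    fix a b assume "a \<in> kerH base" "b \<in> kerH base"
    then show "a \<otimes>\<^bsub>free_group_F\<^esub> b \<in> kerH base" by (auto simp: kerH_def ev_mult[OF assms])
  qed
qed

lemma ev_permutes: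
  assumes "\<And>x. base x permutes S"
  shows "ev base g permutes S"
proof (induction g)
  case Nil then show ?case using permutes_id[of S] by (simp add: id_def)
next
  case (Cons l g)
  obtain x s where l: "l = (x, s)" by (cases l)
  have "lact base l permutes S" using assms l by (auto intro: permutes_inv)
  then show ?case using Cons permutes_compose[of "ev base g" S "lact base l"] by (simp only: ev_Cons)
qed

lemma kerH_rcoset:
  assumes "\<And>x. bij (base x)" and g: "g \<in> carrier free_group_F"
  shows "kerH base #>\<^bsub>free_group_F\<^esub> g = {x \<in> carrier free_group_F. ev base x = ev base g}"
proof -
  interpret group free_group_F by (rule group_F)
  show ?thesis
  proof (rule Set.set_eqI, rule iffI)
    fix x assume "x \<in> kerH base #>\<^bsub>free_group_F\<^esub> g"
    then obtain h where h: "h \<in> kerH base" "x = h \<otimes>\<^bsub>free_group_F\<^esub> g" unfolding r_coset_def by blast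
    then show "x \<in> {x \<in> carrier free_group_F. ev base x = ev base g}"
      using g by (auto simp: kerH_def ev_mult[OF assms(1)])
  next
    fix x assume x: "x \<in> {x \<in> carrier free_group_F. ev base x = ev base g}"
    let ?h = "x \<otimes>\<^bsub>free_group_F\<^esub> inv\<^bsub>free_group_F\<^esub> g"
    have "ev base ?h = id" using x g ev_inv(2)[OF assms(1) g] by (simp add: ev_mult[OF assms(1)])
    then have "?h \<in> kerH base" using x g by (simp add: kerH_def)
    moreover have "?h \<otimes>\<^bsub>free_group_F\<^esub> g = x" using x g by (simp add: m_assoc)
    ultimately show "x \<in> kerH base #>\<^bsub>free_group_F\<^esub> g" unfolding r_coset_def by force
  qed
qed

lemma kerH_fin_index:
  assumes "\<And>x. base x permutes S" and "finite S"
  shows "kerH base \<in> fin_index_subgroups"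
proof -
  have bij: "\<And>x. bij (base x)" using assms(1) permutes_bij by blast
  have "rcosets\<^bsub>free_group_F\<^esub> (kerH base) \<subseteq> (\<lambda>p. {x \<in> carrier free_group_F. ev base x = p}) ` {p. p permutes S}"
  proof
    fix C assume "C \<in> rcosets\<^bsub>free_group_F\<^esub> (kerH base)"
    then obtain g where g: "g \<in> carrier free_group_F" "C = kerH base #>\<^bsub>free_group_F\<^esub> g"
      unfolding RCOSETS_def by blast
    then have "C = {x \<in> carrier free_group_F. ev base x = ev base g}" using kerH_rcoset[OF bij g(1)] by simp
    moreover have "ev base g \<in> {p. p permutes S}" using ev_permutes[OF assms(1)] by simp
    ultimately show "C \<in> (\<lambda>p. {x \<in> carrier free_group_F. ev base x = p}) ` {p. p permutes S}" by blast
  qed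
  then have "finite (rcosets\<^bsub>free_group_F\<^esub> (kerH base))"
    using finite_permutations[OF assms(2)] finite_surj by blast
  then show ?thesis using kerH_subgroup[OF bij] by (simp add: fin_index_subgroups_def)
qed

lemma extend_perm:
  assumes S: "finite S" and AS: "Dm \<subseteq> S" and inj: "inj_on f Dm" and fA: "f ` Dm \<subseteq> S"
  shows "\<exists>p. p permutes S \<and> (\<forall>x\<in>Dm. p x = f x)"
proof -
  have fin: "finite Dm" using S AS finite_subset by blast
  have "card (S - Dm) = card (S - f ` Dm)"
    using AS fA S fin by (simp add: card_Diff_subset card_image[OF inj])
  then obtain g where g: "bij_betw g (S - Dm) (S - f ` Dm)"
    using finite_same_card_bij[of "S - Dm" "S - f ` Dm"] S by auto
  define p where "p x = (if x \<in> Dm then f x else if x \<in> S then g x else x)" for x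
  have img: "p ` S = S"
  proof -
    have "p ` S = f ` Dm \<union> g ` (S - Dm)"
      using AS by (auto simp: p_def image_def) 
    also have "\<dots> = S" using g fA by (auto simp: bij_betw_def)
    finally show ?thesis .
  qed
  have "inj_on p S"
  proof (rule inj_onI)
    fix x y assume xy: "x \<in> S" "y \<in> S" "p x = p y"
    show "x = y"
    proof (cases "x \<in> Dm"; cases "y \<in> Dm")
      assume "x \<in> Dm" "y \<in> Dm" then show ?thesis using xy inj by (auto simp: p_def inj_on_def)
    next
      assume "x \<in> Dm" "y \<notin> Dm"
      then have "p y \<in> S - f ` Dm" "p x \<in> f ` Dm" using xy g by (auto simp: p_def bij_betw_def)
      then show ?thesis using xy by auto
    next
      assume "x \<notin> Dm" "y \<in> Dm"
      then have "p x \<in> S - f ` Dm" "p y \<in> f ` Dm" using xy g by (auto simp: p_def bij_betw_def)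
      then show ?thesis using xy by auto
    next
      assume "x \<notin> Dm" "y \<notin> Dm" then show ?thesis using xy g by (auto simp: p_def bij_betw_def inj_on_def)
    qed
  qed
  then have "bij_betw p S S" using img by (simp add: bij_betw_def)
  moreover have "\<And>x. x \<notin> S \<Longrightarrow> p x = x" using AS by (auto simp: p_def)
  ultimately have "p permutes S" by (rule bij_imp_permutes)
  then show ?thesis by (auto simp: p_def)
qed

fun bar :: "letter \<Rightarrow> letter" where
  "bar A = Abar" | "bar Abar = A" | "bar B = Bbar" | "bar Bbar = B"

lemma bar_bar[simp]: "bar (bar x) = x" by (cases x) auto

lemma del_two_iff: "(u, v) \<in> del_two_sided \<longleftrightarrow> (\<exists>p q x. u = p @ [x, bar x] @ q \<and> v = p @ q)"
proof
  assume "(u, v) \<in> del_two_sided"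
  then obtain p q x y where "u = p @ [x, y] @ q" "v = p @ q"
    "(x, y) \<in> {(A, Abar), (Abar, A), (B, Bbar), (Bbar, B)}"
    unfolding del_two_sided_def by blast
  then have "y = bar x" by auto
  then show "\<exists>p q x. u = p @ [x, bar x] @ q \<and> v = p @ q" using \<open>u = p @ [x, y] @ q\<close> \<open>v = p @ q\<close> by blast
next
  assume "\<exists>p q x. u = p @ [x, bar x] @ q \<and> v = p @ q"
  then obtain p q x where h: "u = p @ [x, bar x] @ q" "v = p @ q" by blast
  have "(x, bar x) \<in> {(A, Abar), (Abar, A), (B, Bbar), (Bbar, B)}" by (cases x) auto
  then show "(u, v) \<in> del_two_sided" using h unfolding del_two_sided_def by blast
qed

lemma del_one_sub: "del_one_sided \<subseteq> del_two_sided"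
  unfolding del_one_sided_def del_two_sided_def by blast

lemma dyck_one_sub: "dyck_one_sided \<subseteq> dyck_two_sided"
  unfolding dyck_one_sided_def dyck_two_sided_def using rtrancl_mono[OF del_one_sub] by blast

lemma del_two_ctx: "(u, v) \<in> del_two_sided \<Longrightarrow> (p @ u @ q, p @ v @ q) \<in> del_two_sided"
  unfolding del_two_iff by (metis append.assoc)

lemma del_two_ctx_rtrancl: "(u, v) \<in> del_two_sided\<^sup>* \<Longrightarrow> (p @ u @ q, p @ v @ q) \<in> del_two_sided\<^sup>*"
proof (induction rule: rtrancl_induct)
  case base then show ?case by simp
next
  case (step y z) then show ?case by (meson del_two_ctx rtrancl.rtrancl_into_rtrancl)
qed

fun push2 :: "letter \<Rightarrow> letter list \<Rightarrow> letter list" where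
  "push2 x [] = [x]"
| "push2 x (y # ys) = (if y = bar x then ys else x # y # ys)"

definition red2 :: "letter list \<Rightarrow> bool" where
  "red2 w \<longleftrightarrow> (\<forall>i. Suc i < length w \<longrightarrow> w ! Suc i \<noteq> bar (w ! i))"

lemma red2_Cons: "red2 (x # w) \<longleftrightarrow> red2 w \<and> (w = [] \<or> hd w \<noteq> bar x)"
proof
  assume r: "red2 (x # w)"
  have "red2 w" unfolding red2_def
  proof (intro allI impI)
    fix i assume "Suc i < length w"
    then show "w ! Suc i \<noteq> bar (w ! i)"
      using r[unfolded red2_def, rule_format, of "Suc i"] by simp
  qed
  moreover have "w = [] \<or> hd w \<noteq> bar x"
    using r[unfolded red2_def, rule_format, of 0] by (cases w) auto
  ultimately show "red2 w \<and> (w = [] \<or> hd w \<noteq> bar x)" by blast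
next
  assume h: "red2 w \<and> (w = [] \<or> hd w \<noteq> bar x)"
  show "red2 (x # w)" unfolding red2_def
  proof (intro allI impI)
    fix i assume i: "Suc i < length (x # w)"
    show "(x # w) ! Suc i \<noteq> bar ((x # w) ! i)"
    proof (cases i)
      case 0 then show ?thesis using h i by (cases w) auto
    next
      case (Suc j) then show ?thesis using h i by (auto simp: red2_def)
    qed
  qed
qed

lemma red2_Nil[simp]: "red2 []" by (simp add: red2_def)

lemma push2_red2: "red2 w \<Longrightarrow> red2 (push2 x w)"
  by (cases w) (auto simp: red2_Cons)

definition r2 :: "letter list \<Rightarrow> letter list" where
  "r2 w = foldr push2 w []"

lemma r2_red2: "red2 (r2 w)"
  unfolding r2_def by (induction w) (auto intro: push2_red2)

lemma push2_del: "(x # w, push2 x w) \<in> del_two_sided\<^sup>*"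
proof (cases w)
  case Nil then show ?thesis by simp
next
  case (Cons y ys)
  show ?thesis
  proof (cases "y = bar x")
    case True
    have "(x # w, push2 x w) \<in> del_two_sided"
      using Cons True unfolding del_two_iff by (intro exI[of _ "[]"] exI[of _ ys] exI[of _ x]) auto
    then show ?thesis by blast
  next
    case False then show ?thesis using Cons by simp
  qed
qed

lemma r2_del: "(w, r2 w) \<in> del_two_sided\<^sup>*"
proof (induction w)
  case Nil then show ?case by (simp add: r2_def)
next
  case (Cons x w)
  have "([x] @ w @ [], [x] @ r2 w @ []) \<in> del_two_sided\<^sup>*" by (rule del_two_ctx_rtrancl[OF Cons])
  then have "(x # w, x # r2 w) \<in> del_two_sided\<^sup>*" by simp
  moreover have "r2 (x # w) = push2 x (r2 w)" by (simp add: r2_def)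
  ultimately show ?case using push2_del[of x "r2 w"] by (metis rtrancl_trans)
qed

lemma not_dyck_r2: "w \<notin> dyck_two_sided \<Longrightarrow> r2 w \<noteq> []"
  using r2_del[of w] unfolding dyck_two_sided_def by auto

lemma sigma_exists:
  assumes red: "red2 v"
  shows "\<exists>\<sigma>. \<sigma> permutes {0..length v} \<and> (\<forall>k<length v. v!k = x \<longrightarrow> \<sigma> (Suc k) = k)
      \<and> (\<forall>k<length v. v!k = bar x \<longrightarrow> \<sigma> k = Suc k)"
proof -
  let ?n = "length v"
  define D1 where "D1 = {Suc k | k. k < ?n \<and> v!k = x}"
  define D2 where "D2 = {k | k. k < ?n \<and> v!k = bar x}"
  define f where "f p = (if p \<in> D1 then p - 1 else Suc p)" for p
  have nb: "\<not> (k < ?n \<and> v!k = bar x \<and> k = Suc k' \<and> v!k' = x)" for k k'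
    using red unfolding red2_def by auto
  have nb2: "\<not> (Suc k < ?n \<and> v!k = bar x \<and> v!(Suc k) = x)" for k
    using red unfolding red2_def by (metis bar_bar)
  have D2D1: "p \<in> D2 \<Longrightarrow> p \<notin> D1" for p
    unfolding D1_def D2_def using nb by blast
  have f1: "k < ?n \<Longrightarrow> v!k = x \<Longrightarrow> f (Suc k) = k" for k
    by (auto simp: f_def D1_def)
  have f2: "k < ?n \<Longrightarrow> v!k = bar x \<Longrightarrow> f k = Suc k" for k
    using D2D1[of k] by (auto simp: f_def D2_def)
  have sub: "D1 \<union> D2 \<subseteq> {0..?n}" by (auto simp: D1_def D2_def)
  have img: "f ` (D1 \<union> D2) \<subseteq> {0..?n}"
  proof
    fix y assume "y \<in> f ` (D1 \<union> D2)"
    then obtain p where p: "p \<in> D1 \<union> D2" "y = f p" by blast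
    from p(1) show "y \<in> {0..?n}"
    proof
      assume "p \<in> D1" then show ?thesis using p f1 by (auto simp: D1_def)
    next
      assume "p \<in> D2" then show ?thesis using p f2 by (auto simp: D2_def)
    qed
  qed
  have inj: "inj_on f (D1 \<union> D2)"
  proof (rule inj_onI)
    fix p q assume p: "p \<in> D1 \<union> D2" and q: "q \<in> D1 \<union> D2" and e: "f p = f q"
    show "p = q"
    proof (cases "p \<in> D1"; cases "q \<in> D1")
      assume a: "p \<in> D1" "q \<in> D1"
      obtain k where k: "p = Suc k" "k < ?n" "v!k = x" using a by (auto simp: D1_def)
      obtain k' where k': "q = Suc k'" "k' < ?n" "v!k' = x" using a by (auto simp: D1_def)
      have "f p = k" using f1[OF k(2,3)] k(1) by simp
      moreover have "f q = k'" using f1[OF k'(2,3)] k'(1) by simp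
      ultimately have "k = k'" using e by simp
      then show ?thesis using k k' by simp
    next
      assume a: "p \<in> D1" "q \<notin> D1"
      then have "q \<in> D2" using q by blast
      then obtain k where k: "q = k" "k < ?n" "v!k = bar x" by (auto simp: D2_def)
      obtain k' where k': "p = Suc k'" "k' < ?n" "v!k' = x" using a by (auto simp: D1_def)
      have "f p = k'" using f1[OF k'(2,3)] k'(1) by simp
      moreover have "f q = Suc k" using f2[OF k(2,3)] k(1) by simp
      ultimately have "k' = Suc k" using e by simp
      then have "v!(Suc k) = x" "Suc k < ?n" using k' by simp_all
      then show ?thesis using nb2[of k] k(3) by blast
    next
      assume a: "p \<notin> D1" "q \<in> D1"
      then have "p \<in> D2" using p by blast
      then obtain k where k: "p = k" "k < ?n" "v!k = bar x" by (auto simp: D2_def)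
      obtain k' where k': "q = Suc k'" "k' < ?n" "v!k' = x" using a by (auto simp: D1_def)
      have "f q = k'" using f1[OF k'(2,3)] k'(1) by simp
      moreover have "f p = Suc k" using f2[OF k(2,3)] k(1) by simp
      ultimately have "k' = Suc k" using e by simp
      then have "v!(Suc k) = x" "Suc k < ?n" using k' by simp_all
      then show ?thesis using nb2[of k] k(3) by blast
    next
      assume "p \<notin> D1" "q \<notin> D1"
      then have "f p = Suc p" "f q = Suc q" unfolding f_def by auto
      then have "Suc p = Suc q" using e by metis
      then show ?thesis by simp
    qed
  qed
  obtain \<sigma> where s: "\<sigma> permutes {0..?n}" "\<forall>y\<in>D1 \<union> D2. \<sigma> y = f y"
    using extend_perm[OF _ sub inj img] by auto
  have "\<forall>k<?n. v!k = x \<longrightarrow> \<sigma> (Suc k) = k" using s(2) f1 by (auto simp: D1_def)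
  moreover have "\<forall>k<?n. v!k = bar x \<longrightarrow> \<sigma> k = Suc k" using s(2) f2 by (auto simp: D2_def)
  ultimately show ?thesis using s(1) by blast
qed

definition baseF :: "(nat \<Rightarrow> nat) \<Rightarrow> (nat \<Rightarrow> nat) \<Rightarrow> letter \<Rightarrow> nat \<Rightarrow> nat" where
  "baseF sa sb x = (case x of A \<Rightarrow> sa | Abar \<Rightarrow> inv_into UNIV sa | B \<Rightarrow> sb | Bbar \<Rightarrow> inv_into UNIV sb)"

lemma baseF_permutes:
  assumes "sa permutes S" "sb permutes S"
  shows "baseF sa sb x permutes S"
  using assms by (cases x) (auto simp: baseF_def intro: permutes_inv)

lemma baseF_bar:
  assumes "sa permutes S" "sb permutes S"
  shows "baseF sa sb (bar x) \<circ> baseF sa sb x = id"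
proof -
  have "bij sa" "bij sb" using assms permutes_bij by blast+
  then have "inv_into UNIV sa \<circ> sa = id" "sa \<circ> inv_into UNIV sa = id"
     "inv_into UNIV sb \<circ> sb = id" "sb \<circ> inv_into UNIV sb = id"
    by (auto simp: bij_def surj_iff)
  then show ?thesis by (cases x) (auto simp: baseF_def)
qed

lemma emb_append: "emb (u @ v) = emb u @ emb v" by (simp add: emb_def)

lemma ev_del_two:
  assumes hb: "\<And>x. base (bar x) \<circ> base x = id" and uv: "(u, v) \<in> del_two_sided\<^sup>*"
  shows "ev base (emb u) = ev base (emb v)"
  using uv
proof (induction rule: rtrancl_induct)
  case base then show ?case by simp
next
  case (step y z)
  then obtain p q x where pq: "y = p @ [x, bar x] @ q" "z = p @ q" by (auto simp: del_two_iff)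
  have "base x \<circ> base (bar x) = id" using hb[of "bar x"] by simp
  then have pt: "base x (base (bar x) t) = t" for t by (metis comp_apply id_apply)
  have "ev base (emb y) = ev base (emb p) \<circ> (base x \<circ> (base (bar x) \<circ> ev base (emb q)))"
    using pq by (simp add: emb_append ev_append emb_def)
  also have "\<dots> = ev base (emb z)"
    using pq by (simp add: emb_append ev_append fun_eq_iff pt)
  finally have "ev base (emb y) = ev base (emb z)" .
  then show ?case using step by simp
qed

lemma ev_dyck_one:
  assumes hb: "\<And>x. base (bar x) \<circ> base x = id" and d: "d \<in> dyck_one_sided"
  shows "ev base (emb d) = id"
  using ev_del_two[of base, OF hb, of d "[]"] d dyck_one_sub by (auto simp: dyck_two_sided_def emb_def)

lemma ev_drop:
  assumes h: "\<And>k. k < length v \<Longrightarrow> base (v!k) (Suc k) = k" and m: "m \<le> length v"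
  shows "ev base (emb (drop (length v - m) v)) (length v) = length v - m"
  using m
proof (induction m)
  case 0 then show ?case by (simp add: emb_def)
next
  case (Suc m)
  let ?k = "length v - Suc m"
  have k: "?k < length v" "Suc ?k = length v - m" using Suc.prems by auto
  have "drop ?k v = v ! ?k # drop (Suc ?k) v" using k(1) by (rule Cons_nth_drop_Suc[symmetric])
  then have "ev base (emb (drop ?k v)) (length v) = base (v ! ?k) (ev base (emb (drop (Suc ?k) v)) (length v))"
    by (simp add: emb_def)
  also have "\<dots> = base (v ! ?k) (Suc ?k)" using Suc k by simp
  also have "\<dots> = ?k" using h[OF k(1)] by simp
  finally show ?case .
qed

lemma dir1_sep:
  assumes w: "w \<notin> dyck_two_sided"
  shows "\<exists>base S. finite S \<and> (\<forall>x. base x permutes S) \<and> (\<forall>x. base (bar x) \<circ> base x = id)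
           \<and> ev base (emb w) \<noteq> id"
proof -
  let ?v = "r2 w"
  let ?n = "length ?v"
  have ne: "?v \<noteq> []" using not_dyck_r2[OF w] .
  have red: "red2 ?v" by (rule r2_red2)
  obtain sa where sa: "sa permutes {0..?n}" "\<forall>k<?n. ?v!k = A \<longrightarrow> sa (Suc k) = k"
      "\<forall>k<?n. ?v!k = Abar \<longrightarrow> sa k = Suc k"
    using sigma_exists[OF red, of A] by auto
  obtain sb where sb: "sb permutes {0..?n}" "\<forall>k<?n. ?v!k = B \<longrightarrow> sb (Suc k) = k"
      "\<forall>k<?n. ?v!k = Bbar \<longrightarrow> sb k = Suc k"
    using sigma_exists[OF red, of B] by auto
  let ?base = "baseF sa sb"
  have perm: "\<forall>x. ?base x permutes {0..?n}" using baseF_permutes[OF sa(1) sb(1)] by blast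
  have hb: "\<And>x. ?base (bar x) \<circ> ?base x = id" using baseF_bar[OF sa(1) sb(1)] by blast
  have injs: "inj sa" "inj sb" using sa(1) sb(1) permutes_inj by blast+
  have h: "?base (?v!k) (Suc k) = k" if k: "k < ?n" for k
  proof (cases "?v!k")
    case A then show ?thesis using sa k by (simp add: baseF_def)
  next
    case Abar
    then have "sa k = Suc k" using sa k by simp
    then show ?thesis using Abar injs(1) by (metis baseF_def letter.simps(14) inv_f_f)
  next
    case B then show ?thesis using sb k by (simp add: baseF_def)
  next
    case Bbar
    then have "sb k = Suc k" using sb k by simp
    then show ?thesis using Bbar injs(2) by (metis baseF_def letter.simps(16) inv_f_f)
  qed
  have "ev ?base (emb ?v) ?n = 0" using ev_drop[of ?v ?base ?n] h by simp
  moreover have "ev ?base (emb w) = ev ?base (emb ?v)" using ev_del_two[of ?base, OF hb r2_del] .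
  ultimately have "ev ?base (emb w) \<noteq> id" using ne by (metis id_apply length_0_conv)
  then show ?thesis using perm hb by blast
qed

inductive dg :: "letter list \<Rightarrow> bool" where
  dg_nil: "dg []"
| dg_pair: "dg w1 \<Longrightarrow> dg w2 \<Longrightarrow> dg (x # w1 @ bar x # w2)"

lemma dg_insert: "dg w \<Longrightarrow> w = u @ v \<Longrightarrow> dg (u @ [x, bar x] @ v)"
proof (induction w arbitrary: u v rule: dg.induct)
  case dg_nil
  then show ?case using dg.dg_pair[OF dg.dg_nil dg.dg_nil, of x] by simp
next
  case (dg_pair w1 w2 y u v)
  show ?case
  proof (cases u)
    case Nil
    have "dg (y # w1 @ bar y # w2)" using dg.dg_pair[OF dg_pair.hyps] .
    then have "dg (x # [] @ bar x # (y # w1 @ bar y # w2))" using dg.dg_pair[OF dg.dg_nil] by blast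
    then show ?thesis using Nil dg_pair.prems by simp
  next
    case (Cons y' u')
    then have yy: "y' = y" and e: "u' @ v = w1 @ bar y # w2" using dg_pair.prems by auto
    from e obtain us where
      "(u' = w1 @ us \<and> us @ v = bar y # w2) \<or> (u' @ us = w1 \<and> v = us @ bar y # w2)"
      by (auto simp: append_eq_append_conv2)
    then show ?thesis
    proof
      assume h: "u' @ us = w1 \<and> v = us @ bar y # w2"
      have "dg (u' @ [x, bar x] @ us)" using dg_pair.IH(1)[of u' us] h by simp
      then have "dg (y # (u' @ [x, bar x] @ us) @ bar y # w2)" using dg.dg_pair dg_pair.hyps(2) by blast
      then show ?thesis using Cons yy h by simp
    next
      assume h: "u' = w1 @ us \<and> us @ v = bar y # w2"
      show ?thesis
      proof (cases us)
        case Nil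
        have "dg (w1 @ [x, bar x] @ [])" using dg_pair.IH(1)[of w1 "[]"] by simp
        then have "dg (y # (w1 @ [x, bar x]) @ bar y # w2)" using dg.dg_pair dg_pair.hyps(2) by fastforce
        then show ?thesis using Cons yy h Nil by simp
      next
        case (Cons z us')
        then have "z = bar y" "w2 = us' @ v" using h by auto
        have "dg (us' @ [x, bar x] @ v)" using dg_pair.IH(2) \<open>w2 = us' @ v\<close> by blast
        then have "dg (y # w1 @ bar y # (us' @ [x, bar x] @ v))" using dg.dg_pair dg_pair.hyps(1) by blast
        then show ?thesis using \<open>u = y' # u'\<close> yy h Cons \<open>z = bar y\<close> by simp
      qed
    qed
  qed
qed

lemma dyck_two_dg: "w \<in> dyck_two_sided \<Longrightarrow> dg w"
  unfolding dyck_two_sided_def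
proof (simp, induction rule: converse_rtrancl_induct)
  case base then show ?case by (rule dg_nil)
next
  case (step y z)
  then obtain p q x where "y = p @ [x, bar x] @ q" "z = p @ q" by (auto simp: del_two_iff)
  then show ?case using dg_insert[OF step(3)] by simp
qed

lemma del_one_ctx: "(u, v) \<in> del_one_sided \<Longrightarrow> (p @ u @ q, p @ v @ q) \<in> del_one_sided"
  unfolding del_one_sided_def
proof -
  assume "(u, v) \<in> {(u @ [x, y] @ v, u @ v) |u v x y. (x, y) \<in> {(A, Abar), (B, Bbar)}}"
  then obtain u1 v1 x y where "u = u1 @ [x, y] @ v1" "v = u1 @ v1" "(x, y) \<in> {(A, Abar), (B, Bbar)}" by blast
  then show "(p @ u @ q, p @ v @ q) \<in> {(u @ [x, y] @ v, u @ v) |u v x y. (x, y) \<in> {(A, Abar), (B, Bbar)}}"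
    by (intro CollectI exI[of _ "p @ u1"] exI[of _ "v1 @ q"] exI[of _ x] exI[of _ y]) auto
qed

lemma del_one_ctx_rtrancl: "(u, v) \<in> del_one_sided\<^sup>* \<Longrightarrow> (p @ u @ q, p @ v @ q) \<in> del_one_sided\<^sup>*"
proof (induction rule: rtrancl_induct)
  case base then show ?case by simp
next
  case (step y z) then show ?case by (meson del_one_ctx rtrancl.rtrancl_into_rtrancl)
qed

lemma d1_nil: "[] \<in> dyck_one_sided" by (simp add: dyck_one_sided_def)

lemma d1_app: "d \<in> dyck_one_sided \<Longrightarrow> e \<in> dyck_one_sided \<Longrightarrow> d @ e \<in> dyck_one_sided"
  unfolding dyck_one_sided_def
  using del_one_ctx_rtrancl[of d "[]" "[]" e] by (auto intro: rtrancl_trans)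

lemma d1_wrap:
  assumes "d \<in> dyck_one_sided" "o' \<in> {A, B}"
  shows "o' # d @ [bar o'] \<in> dyck_one_sided"
proof -
  have "([o'] @ d @ [bar o'], [o'] @ [] @ [bar o']) \<in> del_one_sided\<^sup>*"
    using assms(1) del_one_ctx_rtrancl unfolding dyck_one_sided_def by blast
  moreover have "([] @ [o', bar o'] @ [], [] @ []) \<in> del_one_sided"
    using assms(2) unfolding del_one_sided_def by auto
  ultimately show ?thesis unfolding dyck_one_sided_def by simp
qed

definition rep :: "nat \<Rightarrow> 'a list \<Rightarrow> 'a list" where
  "rep n u = concat (replicate n u)"

lemma rep_Suc: "rep (Suc n) u = rep n u @ u"
  by (simp add: rep_def replicate_append_same[symmetric])

lemma d1_rep: "d \<in> dyck_one_sided \<Longrightarrow> rep n d \<in> dyck_one_sided"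
  by (induction n) (auto simp: rep_Suc d1_app rep_def d1_nil)

lemma d1_wrapn:
  assumes "d \<in> dyck_one_sided" "o' \<in> {A, B}"
  shows "replicate k o' @ d @ replicate k (bar o') \<in> dyck_one_sided"
proof (induction k)
  case 0 then show ?case using assms by simp
next
  case (Suc k)
  have "replicate (Suc k) o' @ d @ replicate (Suc k) (bar o') = o' # (replicate k o' @ d @ replicate k (bar o')) @ [bar o']"
    by (simp add: replicate_append_same[symmetric])
  then show ?case using d1_wrap[OF Suc assms(2)] by simp
qed

lemma (in group) dyck_approx:
  fixes N :: nat
  assumes Papp: "\<And>u v. P (u @ v) = P u \<otimes> P v" and Pnil: "P [] = \<one>"
    and Pc: "\<And>u. P u \<in> carrier G"
    and N: "\<And>g. g \<in> carrier G \<Longrightarrow> g [^] N = \<one>" "N \<ge> 1"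
    and w: "dg w"
  shows "\<exists>d \<in> dyck_one_sided. P d = P w"
  using w
proof (induction rule: dg.induct)
  case dg_nil then show ?case using d1_nil by blast
next
  case (dg_pair w1 w2 x)
  obtain d1 where d1: "d1 \<in> dyck_one_sided" "P d1 = P w1" using dg_pair.IH(1) by blast
  obtain d2 where d2: "d2 \<in> dyck_one_sided" "P d2 = P w2" using dg_pair.IH(2) by blast
  have Pw: "P (x # w1 @ bar x # w2) = P [x] \<otimes> P w1 \<otimes> P [bar x] \<otimes> P w2"
    using Papp[of "[x]" "w1 @ bar x # w2"] Papp[of w1 "bar x # w2"] Papp[of "[bar x]" w2] Pc
    by (simp add: m_assoc)
  have powrep: "P (replicate k l) = P [l] [^] k" for k l
  proof (induction k)
    case 0 then show ?case using Pnil by simp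
  next
    case (Suc k) then show ?case using Papp[of "replicate k l" "[l]"] by (simp add: replicate_append_same[symmetric])
  qed
  have powrep2: "P (rep k u) = P u [^] k" for k u
  proof (induction k)
    case 0 then show ?case using Pnil by (simp add: rep_def)
  next
    case (Suc k) then show ?case using Papp[of "rep k u" u] by (simp add: rep_Suc)
  qed
  have inv_pow: "z [^] (N - 1) = inv z" if z: "z \<in> carrier G" for z
  proof -
    have "z [^] (N - 1) \<otimes> z = z [^] N" using N(2) nat_pow_Suc[of z "N - 1"] by simp
    then have "z [^] (N - 1) \<otimes> z = \<one>" using N(1)[OF z] by simp
    from inv_equality[OF this z] show ?thesis using z by simp
  qed
  show ?case
  proof (cases "x \<in> {A, B}")
    case True
    let ?d = "(x # d1 @ [bar x]) @ d2"
    have "?d \<in> dyck_one_sided" using d1_wrap[OF d1(1) True] d2(1) d1_app by blast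
    moreover have "P ?d = P (x # w1 @ bar x # w2)"
      using Pw Papp[of "x # d1 @ [bar x]" d2] Papp[of "[x]" "d1 @ [bar x]"] Papp[of d1 "[bar x]"] d1 d2 Pc
      by (simp add: m_assoc)
    ultimately show ?thesis by blast
  next
    case False
    define o' where "o' = bar x"
    have o': "o' \<in> {A, B}" "x = bar o'" using False unfolding o'_def by (cases x; auto)+
    let ?X = "P [o']" and ?Y = "P [bar o']" and ?g = "P d1"
    let ?inner = "replicate (N - 1) o' @ rep (N - 1) d1 @ replicate (N - 1) (bar o')"
    let ?d = "rep (N - 1) ?inner @ d2"
    have "?inner \<in> dyck_one_sided" using d1_wrapn[OF d1_rep[OF d1(1)] o'(1)] .
    then have "?d \<in> dyck_one_sided" using d1_rep d2(1) d1_app by blast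
    moreover have "P ?inner = inv ?X \<otimes> inv ?g \<otimes> inv ?Y"
      using Papp powrep powrep2 inv_pow Pc by (simp add: m_assoc)
    then have "P (rep (N - 1) ?inner) = inv (inv ?X \<otimes> inv ?g \<otimes> inv ?Y)"
      using powrep2 inv_pow Pc by simp
    then have "P (rep (N - 1) ?inner) = ?Y \<otimes> ?g \<otimes> ?X"
      using Pc by (simp add: inv_mult_group m_assoc)
    then have "P ?d = P (x # w1 @ bar x # w2)"
      using Pw Papp[of "rep (N - 1) ?inner" d2] d1 d2 o' by simp
    ultimately show ?thesis by blast
  qed
qed

locale FGL = group G for G :: "gword monoid" (structure) + assumes Gdef: "G = free_group_F"

lemma FGL_inst: "FGL free_group_F"
  unfolding FGL_def FGL_axioms_def using group_F by simp

lemma reduced_emb: "reduced (emb w)"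
  by (simp add: reduced_def emb_def)

context FGL begin

lemma fin_index_iff: "K \<in> fin_index_subgroups \<longleftrightarrow> subgroup K G \<and> finite (rcosets K)"
  by (simp add: fin_index_subgroups_def Gdef)

lemma emb_carrier: "emb w \<in> carrier G"
  by (simp add: Gdef F_carrier reduced_emb)

lemma emb_mult: "emb (u @ v) = emb u \<otimes> emb v"
proof -
  have "emb u \<otimes> emb v = reduce (emb u @ emb v)" by (simp add: Gdef F_mult)
  also have "\<dots> = emb (u @ v)" by (metis emb_append reduce_reduced reduced_emb)
  finally show ?thesis by simp
qed

lemma emb_nil: "emb [] = \<one>" by (simp add: Gdef F_one emb_def)

lemma carrier_fin_index: "carrier G \<in> fin_index_subgroups"
proof -
  have "rcosets (carrier G) \<subseteq> {carrier G}"
    unfolding RCOSETS_def using coset_join2[OF _ subgroup_self] by auto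
  then have "finite (rcosets (carrier G))" using finite_subset by blast
  then show ?thesis using subgroup_self by (simp add: fin_index_iff)
qed

definition basisF where "basisF = {x <# H | x H. x \<in> carrier G \<and> H \<in> fin_index_subgroups}"

lemma profinite_eq: "profinite_F = topology_generated_by basisF"
proof -
  have "basisF = {x <#\<^bsub>free_group_F\<^esub> H | x H. x \<in> carrier free_group_F \<and> H \<in> fin_index_subgroups}"
    unfolding basisF_def by (simp add: Gdef)
  then show ?thesis by (simp add: profinite_F_def)
qed

lemma topspace_profinite: "topspace profinite_F = carrier G"
proof -
  have "\<Union>basisF \<subseteq> carrier G"
    unfolding basisF_def using l_coset_subset_G fin_index_iff subgroup.subset by blast
  moreover have "carrier G \<subseteq> \<Union>basisF"
  proof
    fix x assume x: "x \<in> carrier G"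
    have "\<one> <# carrier G \<in> basisF" unfolding basisF_def using carrier_fin_index by blast
    moreover have "\<one> <# carrier G = carrier G" by (simp add: lcos_mult_one)
    ultimately show "x \<in> \<Union>basisF" using x by auto
  qed
  ultimately show ?thesis by (simp add: profinite_eq)
qed

lemma fin_index_Int:
  assumes "K1 \<in> fin_index_subgroups" "K2 \<in> fin_index_subgroups"
  shows "K1 \<inter> K2 \<in> fin_index_subgroups"
proof -
  have s: "subgroup K1 G" "subgroup K2 G" and f: "finite (rcosets K1)" "finite (rcosets K2)"
    using assms by (auto simp: fin_index_iff)
  have eq: "(K1 \<inter> K2) #> g = (K1 #> g) \<inter> (K2 #> g)" if g: "g \<in> carrier G" for g
  proof
    show "(K1 \<inter> K2) #> g \<subseteq> (K1 #> g) \<inter> (K2 #> g)" unfolding r_coset_def by blast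
  next
    show "(K1 #> g) \<inter> (K2 #> g) \<subseteq> (K1 \<inter> K2) #> g"
    proof
      fix y assume "y \<in> (K1 #> g) \<inter> (K2 #> g)"
      then obtain k1 k2 where k: "k1 \<in> K1" "k2 \<in> K2" "y = k1 \<otimes> g" "y = k2 \<otimes> g"
        unfolding r_coset_def by blast
      have "k1 \<in> carrier G" "k2 \<in> carrier G" using k s subgroup.subset by blast+
      then have "k1 = k2" using k g right_cancel by metis
      then show "y \<in> (K1 \<inter> K2) #> g" using k unfolding r_coset_def by blast
    qed
  qed
  have "rcosets (K1 \<inter> K2) \<subseteq> (\<lambda>(A, B). A \<inter> B) ` ((rcosets K1) \<times> (rcosets K2))"
  proof
    fix C assume "C \<in> rcosets (K1 \<inter> K2)"
    then obtain g where g: "g \<in> carrier G" "C = (K1 \<inter> K2) #> g" unfolding RCOSETS_def by blast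
    then have "C = (\<lambda>(A, B). A \<inter> B) (K1 #> g, K2 #> g)" using eq by simp
    moreover have "(K1 #> g, K2 #> g) \<in> (rcosets K1) \<times> (rcosets K2)" using g unfolding RCOSETS_def by blast
    ultimately show "C \<in> (\<lambda>(A, B). A \<inter> B) ` ((rcosets K1) \<times> (rcosets K2))" by blast
  qed
  then have "finite (rcosets (K1 \<inter> K2))" using f finite_subset by blast
  then show ?thesis using subgroups_Inter_pair[OF s] by (simp add: fin_index_iff)
qed

lemma nbhd:
  assumes "generate_topology_on basisF T" "z \<in> T"
  shows "\<exists>K \<in> fin_index_subgroups. z <# K \<subseteq> T"
  using assms
proof (induction arbitrary: z rule: generate_topology_on.induct)
  case Empty then show ?case by simp
next
  case (Int a b)
  obtain K1 where K1: "K1 \<in> fin_index_subgroups" "z <# K1 \<subseteq> a" using Int by blast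
  obtain K2 where K2: "K2 \<in> fin_index_subgroups" "z <# K2 \<subseteq> b" using Int by blast
  have "z <# (K1 \<inter> K2) \<subseteq> a \<inter> b" using K1 K2 unfolding l_coset_def by blast
  then show ?case using fin_index_Int[OF K1(1) K2(1)] by blast
next
  case (UN K)
  then obtain k where "k \<in> K" "z \<in> k" by blast
  then show ?case using UN by blast
next
  case (Basis s)
  then obtain x H where xH: "s = x <# H" "x \<in> carrier G" "H \<in> fin_index_subgroups"
    unfolding basisF_def by blast
  have "z <# H = x <# H" using l_repr_independence[of z x H] xH Basis fin_index_iff by auto
  then show ?case using xH by auto
qed

end

context FGL begin

definition act :: "gword set \<Rightarrow> gword \<Rightarrow> gword set \<Rightarrow> gword set" where
  "act K g = (\<lambda>C \<in> rcosets K. C #> inv g)"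

lemma rc_sub: "subgroup K G \<Longrightarrow> C \<in> rcosets K \<Longrightarrow> C \<subseteq> carrier G"
  unfolding RCOSETS_def using r_coset_subset_G subgroup.subset by blast

lemma rc_act: assumes K: "subgroup K G" and C: "C \<in> rcosets K" and a: "a \<in> carrier G"
  shows "C #> a \<in> rcosets K"
proof -
  obtain b where b: "b \<in> carrier G" "C = K #> b" using C unfolding RCOSETS_def by blast
  then have "C #> a = K #> (b \<otimes> a)" using coset_mult_assoc K subgroup.subset a by blast
  then show ?thesis using b a unfolding RCOSETS_def by blast
qed

lemma act_Bij: assumes K: "subgroup K G" and g: "g \<in> carrier G"
  shows "act K g \<in> Bij (rcosets K)"
proof -
  let ?f = "\<lambda>C. C #> inv g" and ?f' = "\<lambda>C. C #> g"
  have "bij_betw ?f (rcosets K) (rcosets K)"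
  proof (rule bij_betw_byWitness[where f' = ?f'])
    show "\<forall>a\<in>rcosets K. ?f' (?f a) = a"
      using coset_mult_assoc rc_sub[OF K] g by (simp add: coset_mult_assoc)
    show "\<forall>a\<in>rcosets K. ?f (?f' a) = a"
      using coset_mult_assoc rc_sub[OF K] g by (simp add: coset_mult_assoc)
    show "?f ` (rcosets K) \<subseteq> rcosets K" using rc_act[OF K] g by blast
    show "?f' ` (rcosets K) \<subseteq> rcosets K" using rc_act[OF K] g by blast
  qed
  then have "bij_betw (act K g) (rcosets K) (rcosets K)"
    unfolding act_def by (rule bij_betw_cong[THEN iffD1, rotated]) simp
  then show ?thesis unfolding Bij_def act_def by simp
qed

lemma act_mult: assumes K: "subgroup K G" and g: "g \<in> carrier G" and h: "h \<in> carrier G"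
  shows "act K (g \<otimes> h) = act K g \<otimes>\<^bsub>BijGroup (rcosets K)\<^esub> act K h"
proof -
  have "act K g \<otimes>\<^bsub>BijGroup (rcosets K)\<^esub> act K h = compose (rcosets K) (act K g) (act K h)"
    using act_Bij[OF K g] act_Bij[OF K h] by (simp add: BijGroup_def)
  also have "\<dots> = act K (g \<otimes> h)"
  proof (rule ext)
    fix C show "compose (rcosets K) (act K g) (act K h) C = act K (g \<otimes> h) C"
    proof (cases "C \<in> rcosets K")
      case True
      have "act K g (act K h C) = (C #> inv h) #> inv g"
        using True rc_act[OF K True, of "inv h"] h by (simp add: act_def)
      also have "\<dots> = C #> inv (g \<otimes> h)"
        using rc_sub[OF K True] g h by (simp add: coset_mult_assoc inv_mult_group)
      finally have e: "act K g (act K h C) = C #> inv (g \<otimes> h)" .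
      have "compose (rcosets K) (act K g) (act K h) C = act K g (act K h C)"
        using True by (simp add: compose_def)
      also have "\<dots> = act K (g \<otimes> h) C" using e True by (simp add: act_def)
      finally show ?thesis .
    qed (simp add: compose_def act_def)
  qed
  finally show ?thesis by simp
qed

lemma act_one: assumes K: "subgroup K G"
  shows "act K \<one> = \<one>\<^bsub>BijGroup (rcosets K)\<^esub>"
  unfolding act_def BijGroup_def using rc_sub[OF K] by (auto intro!: ext)

lemma dir2:
  assumes w: "w \<in> dyck_two_sided" and K: "K \<in> fin_index_subgroups"
  shows "\<exists>d \<in> dyck_one_sided. emb d \<in> emb w <# K"
proof -
  have Ks: "subgroup K G" and Kf: "finite (rcosets K)" using K by (auto simp: fin_index_iff)
  let ?\<Omega> = "rcosets K"
  let ?BG = "BijGroup ?\<Omega>"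
  have grp: "group ?BG" by (rule group_BijGroup)
  define P where "P u = act K (emb u)" for u
  have Papp: "P (u @ v) = P u \<otimes>\<^bsub>?BG\<^esub> P v" for u v
    unfolding P_def using act_mult[OF Ks emb_carrier emb_carrier] by (simp add: emb_mult)
  have Pnil: "P [] = \<one>\<^bsub>?BG\<^esub>" unfolding P_def using act_one[OF Ks] by (simp add: emb_nil)
  have Pc: "P u \<in> carrier ?BG" for u
    unfolding P_def using act_Bij[OF Ks emb_carrier] by (simp add: BijGroup_def)
  have finB: "finite (carrier ?BG)"
  proof -
    have "carrier ?BG \<subseteq> ?\<Omega> \<rightarrow>\<^sub>E ?\<Omega>"
      by (auto simp: BijGroup_def Bij_def bij_betw_def PiE_def extensional_def)
    then show ?thesis using finite_PiE[OF Kf, of "\<lambda>_. ?\<Omega>"] Kf finite_subset by blast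
  qed
  have N1: "order ?BG \<ge> 1"
  proof -
    have "\<one>\<^bsub>?BG\<^esub> \<in> carrier ?BG" using group.is_monoid[OF grp] monoid.one_closed by blast
    then have "carrier ?BG \<noteq> {}" by blast
    then show ?thesis using finB by (simp add: order_def Suc_le_eq card_gt_0_iff)
  qed
  have Npow: "\<And>g. g \<in> carrier ?BG \<Longrightarrow> g [^]\<^bsub>?BG\<^esub> order ?BG = \<one>\<^bsub>?BG\<^esub>"
    using group.pow_order_eq_1[OF grp] by blast
  obtain d where d: "d \<in> dyck_one_sided" "P d = P w"
    using group.dyck_approx[OF grp, of P "order ?BG" w, OF Papp Pnil Pc Npow N1 dyck_two_dg[OF w]] by blast
  have KO: "K \<in> ?\<Omega>" using subgroup.subgroup_in_rcosets[OF Ks is_group] .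
  have "K #> inv (emb d) = K #> inv (emb w)"
    using fun_cong[OF d(2), of K] KO unfolding P_def act_def by simp
  moreover have "inv (emb d) \<in> K #> inv (emb d)" using rcos_self[OF _ Ks] emb_carrier by simp
  ultimately obtain k where k: "k \<in> K" "inv (emb d) = k \<otimes> inv (emb w)"
    unfolding r_coset_def by auto
  have kc: "k \<in> carrier G" using k(1) Ks subgroup.subset by blast
  have "emb d = inv (k \<otimes> inv (emb w))" using k(2) emb_carrier
    by (metis inv_inv)
  also have "\<dots> = emb w \<otimes> inv k" using kc emb_carrier by (simp add: inv_mult_group)
  finally have "emb d \<in> emb w <# K"
    using k(1) Ks subgroup.m_inv_closed unfolding l_coset_def by fastforce
  then show ?thesis using d(1) by blast
qed

end

context FGL begin

lemma open_coset:
  assumes "x \<in> carrier G" "H \<in> fin_index_subgroups"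
  shows "openin profinite_F (x <# H)"
proof -
  have "x <# H \<in> basisF" using assms unfolding basisF_def by blast
  then show ?thesis unfolding profinite_eq openin_topology_generated_by_iff
    by (rule generate_topology_on.Basis)
qed

lemma main: "topM closure_of (emb ` dyck_one_sided) = emb ` dyck_two_sided"
proof (rule Set.set_eqI, rule iffI)
  fix x assume x: "x \<in> topM closure_of (emb ` dyck_one_sided)"
  then have xt: "x \<in> topspace topM"
    and cl: "\<And>T. x \<in> T \<Longrightarrow> openin topM T \<Longrightarrow> \<exists>y \<in> emb ` dyck_one_sided. y \<in> T"
    unfolding closure_of_def by blast+
  then obtain w where w: "x = emb w" unfolding topM_def by auto
  show "x \<in> emb ` dyck_two_sided"
  proof (rule ccontr)
    assume "x \<notin> emb ` dyck_two_sided"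
    then have "w \<notin> dyck_two_sided" using w by blast
    then obtain base S where bS: "finite S" "\<forall>x. base x permutes S" "\<forall>x. base (bar x) \<circ> base x = id"
      "ev base (emb w) \<noteq> id"
      using dir1_sep by blast
    have bij: "\<And>x. bij (base x)" using bS(2) permutes_bij by blast
    let ?H = "kerH base"
    have Hf: "?H \<in> fin_index_subgroups" using kerH_fin_index[of base S] bS by blast
    have Hs: "subgroup ?H G" using Hf fin_index_iff by blast
    let ?T = "(emb w <# ?H) \<inter> range emb"
    have oT: "openin topM ?T" unfolding topM_def openin_subtopology
      using open_coset[OF emb_carrier Hf] by blast
    have xT: "x \<in> ?T" using w lcos_self[OF emb_carrier Hs] by blast
    obtain y where y: "y \<in> emb ` dyck_one_sided" "y \<in> ?T" using cl[OF xT oT] by blast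
    then obtain d where d: "d \<in> dyck_one_sided" "emb d \<in> emb w <# ?H" by blast
    then obtain h where h: "h \<in> ?H" "emb d = emb w \<otimes> h" unfolding l_coset_def by blast
    have "ev base (emb d) = ev base (emb w) \<circ> ev base h"
      using h(2) ev_mult[of base "emb w" h, OF bij] Gdef by simp
    also have "\<dots> = ev base (emb w)" using h(1) by (simp add: kerH_def)
    finally have "ev base (emb w) = id" using ev_dyck_one[of base d] bS(3) d(1) by simp
    then show False using bS(4) by simp
  qed
next
  fix x assume "x \<in> emb ` dyck_two_sided"
  then obtain w where w: "x = emb w" "w \<in> dyck_two_sided" by blast
  have "x \<in> topspace topM" unfolding topM_def using w emb_carrier topspace_profinite by simp
  moreover have "\<exists>y \<in> emb ` dyck_one_sided. y \<in> T" if T: "x \<in> T" "openin topM T" for T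
  proof -
    obtain T' where T': "openin profinite_F T'" "T = T' \<inter> range emb"
      using T(2) unfolding topM_def openin_subtopology by blast
    have gT: "generate_topology_on basisF T'" using T'(1) unfolding profinite_eq openin_topology_generated_by_iff .
    have "emb w \<in> T'" using T(1) T'(2) w(1) by auto
    from nbhd[OF gT this] obtain K where K: "K \<in> fin_index_subgroups" "emb w <# K \<subseteq> T'" ..
    obtain d where "d \<in> dyck_one_sided" "emb d \<in> emb w <# K" using dir2[OF w(2) K(1)] by blast
    then show ?thesis using K T' by blast
  qed
  ultimately show "x \<in> topM closure_of (emb ` dyck_one_sided)" unfolding closure_of_def by blast
qed

end

theorem theorem1:
  shows "topM closure_of (emb ` dyck_one_sided) = emb ` dyck_two_sided"
  by (rule FGL.main[OF FGL_inst])

end
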